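(* Let $R$ be a commutative ring, $f\in R[[X]]$, and $S=R[[X]]/(f)$. Then every Cauchy sequence in $S$ for the $f_0S$-adic topology converges in $S$. Moreover, if $f_0$ is a nonzerodivisor in $R$ or $R$ is Noetherian, then $S$ is complete with respect to $f_0S$ (i.e. the natural map $S\to\varprojlim S/f_0^nS$ is an isomorphism), and the canonical $R[[X]]$-homomorphism $R[[X]]/(f)\to\widehat{R}_{(f_0)}[[X]]/(f)$ is an isomorphism.
   Context: $f_0$ is the constant term of $f$; $\widehat{R}_{(f_0)}$ is the $f_0$-adic completion of $R$. *)

theory Defs
  imports "HOL-Computational_Algebra.Formal_Power_Series" "HOL-Library.Function_Algebras"
begin

text \<open>For g, h in R[[X]]: their images in S = R[[X]]/(f) are congruent modulo f0^k S,
  i.e. g - h lies in the ideal f0^k R[[X]] + f R[[X]].\<close>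
definition fadic_cong :: "'a::comm_ring_1 fps \<Rightarrow> nat \<Rightarrow> 'a fps \<Rightarrow> 'a fps \<Rightarrow> bool" where
  "fadic_cong f k g h \<longleftrightarrow> (\<exists>a b. g - h = fps_const ((fps_nth f 0) ^ k) * a + f * b)"

definition fadic_Cauchy :: "'a::comm_ring_1 fps \<Rightarrow> (nat \<Rightarrow> 'a fps) \<Rightarrow> bool" where
  "fadic_Cauchy f s \<longleftrightarrow> (\<forall>k. \<exists>N. \<forall>m\<ge>N. \<forall>n\<ge>N. fadic_cong f k (s m) (s n))"

definition fadic_converges :: "'a::comm_ring_1 fps \<Rightarrow> (nat \<Rightarrow> 'a fps) \<Rightarrow> bool" where
  "fadic_converges f s \<longleftrightarrow> (\<exists>l. \<forall>k. \<exists>N. \<forall>n\<ge>N. fadic_cong f k (s n) l)"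

text \<open>S is complete w.r.t. f0 S: the natural map S \<rightarrow> lim S/f0^n S is injective
  (first conjunct) and surjective (second conjunct; a compatible system is given by
  representatives a n of its components in S/f0^n S).\<close>
definition fadic_complete :: "'a::comm_ring_1 fps \<Rightarrow> bool" where
  "fadic_complete f \<longleftrightarrow>
     (\<forall>g. (\<forall>n. fadic_cong f n g 0) \<longrightarrow> f dvd g) \<and>
     (\<forall>a. (\<forall>n. fadic_cong f n (a (Suc n)) (a n)) \<longrightarrow> (\<exists>s. \<forall>n. fadic_cong f n s (a n)))"

text \<open>The completion of R at t is lim R/t^n R = compl_carrier t / compl_null t, where a
  sequence c represents the element whose component in R/t^n R is c n. Both sets live in the
  pointwise ring nat \<Rightarrow> 'a; compl_carrier t is a subring and compl_null t an ideal of it.\<close>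
definition compl_carrier :: "'a::comm_ring_1 \<Rightarrow> (nat \<Rightarrow> 'a) set" where
  "compl_carrier t = {c. \<forall>n. t ^ n dvd (c (Suc n) - c n)}"

definition compl_null :: "'a::comm_ring_1 \<Rightarrow> (nat \<Rightarrow> 'a) set" where
  "compl_null t = {c. \<forall>n. t ^ n dvd c n}"

definition compl_embed :: "'a::comm_ring_1 fps \<Rightarrow> (nat \<Rightarrow> 'a) fps" where
  "compl_embed g = Abs_fps (\<lambda>i. (\<lambda>n. fps_nth g i))"

text \<open>R^[[X]] is represented by power series G with all coefficients in compl_carrier t,
  modulo those with all coefficients in compl_null t. The ideal (f) of R^[[X]] then
  corresponds to the following set: G represents an element of (f) in R^[[X]].\<close>
definition compl_ps_ideal :: "'a::comm_ring_1 \<Rightarrow> 'a fps \<Rightarrow> (nat \<Rightarrow> 'a) fps set" where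
  "compl_ps_ideal t f = {G. \<exists>H N. (\<forall>i. fps_nth H i \<in> compl_carrier t) \<and> (\<forall>i. fps_nth N i \<in> compl_null t)
                              \<and> G = N + compl_embed f * H}"

text \<open>The canonical R[[X]]-homomorphism R[[X]]/(f) \<rightarrow> R^_(f0)[[X]]/(f) is an isomorphism,
  i.e. bijective (it is a well-defined ring homomorphism by construction).\<close>
definition canon_map_iso :: "'a::comm_ring_1 fps \<Rightarrow> bool" where
  "canon_map_iso f \<longleftrightarrow>
     (\<forall>g. compl_embed g \<in> compl_ps_ideal (fps_nth f 0) f \<longrightarrow> f dvd g) \<and>
     (\<forall>G. (\<forall>i. fps_nth G i \<in> compl_carrier (fps_nth f 0)) \<longrightarrow>
          (\<exists>g. G - compl_embed g \<in> compl_ps_ideal (fps_nth f 0) f))"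

definition nonzerodivisor :: "'a::comm_ring_1 \<Rightarrow> bool" where
  "nonzerodivisor a \<longleftrightarrow> (\<forall>r. a * r = 0 \<longrightarrow> r = 0)"

definition is_ideal :: "'a::comm_ring_1 set \<Rightarrow> bool" where
  "is_ideal I \<longleftrightarrow> 0 \<in> I \<and> (\<forall>x\<in>I. \<forall>y\<in>I. x + y \<in> I) \<and> (\<forall>r. \<forall>x\<in>I. r * x \<in> I)"

definition noetherian :: "'a::comm_ring_1 itself \<Rightarrow> bool" where
  "noetherian _ \<longleftrightarrow> (\<forall>I::'a set. is_ideal I \<longrightarrow>
      (\<exists>F. finite F \<and> F \<subseteq> I \<and> (\<forall>x\<in>I. \<exists>c. x = (\<Sum>a\<in>F. c a * a))))"

end

theory Submission
  imports Defs
begin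

unbundle fps_syntax


definition Sb :: "'a::comm_ring_1 fps \<Rightarrow> (nat \<Rightarrow> 'a fps) \<Rightarrow> 'a fps" where
  "Sb b e = Abs_fps (\<lambda>i. \<Sum>k\<le>i. (b^k * e k) $ i)"

lemma pow_mult_vanish:
  fixes b :: "'a::comm_ring_1 fps"
  assumes "b$0 = 0" "j < k" shows "(b^k * e)$j = 0"
  unfolding fps_mult_nth using assms startsby_zero_power_prefix[OF assms(1)]
  by (intro sum.neutral) auto

lemma Sb_nth:
  fixes b :: "'a::comm_ring_1 fps"
  assumes "b$0 = 0" "i \<le> n" shows "Sb b e $ i = (\<Sum>k\<le>n. (b^k * e k)$i)"
  unfolding Sb_def using assms
  by (auto intro!: sum.mono_neutral_left pow_mult_vanish)

lemma Sb_step: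
  fixes b :: "'a::comm_ring_1 fps"
  assumes b0: "b$0 = 0" shows "Sb b e = e 0 + b * Sb b (\<lambda>k. e (Suc k))"
proof (rule fps_ext)
  fix i
  have "(b * Sb b (\<lambda>k. e (Suc k)))$i = (\<Sum>j=0..i. b$j * (\<Sum>k\<le>i. (b^k * e (Suc k))$(i-j)))"
    unfolding fps_mult_nth[of b]
    apply (rule sum.cong[OF refl])
    subgoal for j using Sb_nth[OF b0, of "i-j" i "\<lambda>k. e (Suc k)"] by simp
    done
  also have "\<dots> = (\<Sum>k\<le>i. \<Sum>j=0..i. b$j * (b^k * e (Suc k))$(i-j))"
    by (simp add: sum_distrib_left sum.swap[of _ "{0..i}"])
  also have "\<dots> = (\<Sum>k\<le>i. (b^(Suc k) * e (Suc k))$i)"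
    by (simp add: fps_mult_nth mult.assoc)
  finally have 1: "(b * Sb b (\<lambda>k. e (Suc k)))$i = (\<Sum>k\<le>i. (b^(Suc k) * e (Suc k))$i)" .
  have "Sb b e $ i = (\<Sum>k\<le>Suc i. (b^k * e k)$i)" by (rule Sb_nth[OF b0]) simp
  also have "\<dots> = (e 0)$i + (\<Sum>k\<le>i. (b^(Suc k) * e (Suc k))$i)"
    by (subst sum.atMost_Suc_shift) simp
  finally show "Sb b e $ i = (e 0 + b * Sb b (\<lambda>k. e (Suc k))) $ i" using 1 by simp
qed

fun ccf :: "'a::comm_ring_1 fps \<Rightarrow> 'a fps \<Rightarrow> nat \<Rightarrow> 'a fps" where
  "ccf T b 0 = 0" | "ccf T b (Suc n) = T^n + b * ccf T b n"

lemma ccf_prop: "(T - b) * ccf T b n = T^n - b^n"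
proof (induction n)
  case (Suc n)
  have "(T - b) * ccf T b (Suc n) = (T - b) * T^n + b * ((T - b) * ccf T b n)"
    by (simp add: algebra_simps)
  also have "\<dots> = (T - b) * T^n + b * (T^n - b^n)" by (simp only: Suc)
  also have "\<dots> = T^Suc n - b^Suc n" by (simp add: algebra_simps)
  finally show ?case .
qed simp

lemma core:
  fixes f :: "'a::comm_ring_1 fps" and G d :: "nat \<Rightarrow> 'a fps"
  assumes Gd: "\<And>n. G (Suc n) - G n = fps_const ((f$0) ^ n) * d n"
  shows "\<exists>g H E. \<forall>n. G n - g = f * H n - fps_const ((f$0)^n) * E n \<and>
            H (Suc n) - H n = fps_const ((f$0)^n) * E (Suc n)"
proof -
  define t where "t = f$0"
  define T where "T = fps_const t"
  define b where "b = T - f"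
  have b0: "b$0 = 0" by (simp add: b_def T_def t_def)
  have fTb: "f = T - b" by (simp add: b_def)
  define E where "E n = Sb b (\<lambda>k. d (k+n))" for n
  have Estep: "E n = d n + b * E (Suc n)" for n
    unfolding E_def by (subst Sb_step[OF b0]) simp
  define cc where "cc = ccf T b"
  have ccS: "cc (Suc n) = T^n + b * cc n" for n by (simp add: cc_def)
  define H where "H n = (\<Sum>k<n. cc k * d k) + cc n * E n" for n
  define g where "g = G 0 + E 0"
  have Tp: "fps_const (t^n) = T^n" for n by (simp add: T_def)
  have HS: "H (Suc n) - H n = T^n * E (Suc n)" for n
  proof -
    have "H (Suc n) - H n = cc n * d n + cc (Suc n) * E (Suc n) - cc n * E n"
      by (simp add: H_def algebra_simps)
    also have "\<dots> = (cc (Suc n) - b * cc n) * E (Suc n)"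
      by (simp add: Estep[of n] algebra_simps)
    also have "\<dots> = T^n * E (Suc n)" by (simp add: ccS)
    finally show ?thesis .
  qed
  have main: "G n - g = f * H n - T^n * E n" for n
  proof (induction n)
    case 0 then show ?case by (simp add: g_def H_def cc_def)
  next
    case (Suc n)
    have "G (Suc n) - g = (G n - g) + T^n * d n" using Gd[of n] by (simp add: Tp[symmetric] t_def algebra_simps)
    also have "\<dots> = f * H n - T^n * b * E (Suc n)" using Suc by (simp add: Estep[of n] algebra_simps)
    also have "\<dots> = f * H (Suc n) - T^(Suc n) * E (Suc n)"
      using HS[of n] by (simp add: fTb algebra_simps)
    finally show ?case .
  qed
  show ?thesis
    by (rule exI[of _ g], rule exI[of _ H], rule exI[of _ E]) (simp add: main HS Tp[symmetric] t_def)
qed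

lemma cong_sym: "fadic_cong f k x y \<Longrightarrow> fadic_cong f k y x"
  unfolding fadic_cong_def
  by (metis (no_types, opaque_lifting) minus_diff_eq minus_add_distrib mult_minus_right)

lemma cong_trans: "fadic_cong f k x y \<Longrightarrow> fadic_cong f k y z \<Longrightarrow> fadic_cong f k x z"
  unfolding fadic_cong_def
proof (elim exE)
  fix a b a' b'
  assume "x - y = fps_const ((f$0)^k) * a + f * b" "y - z = fps_const ((f$0)^k) * a' + f * b'"
  then have "x - z = fps_const ((f$0)^k) * (a + a') + f * (b + b')"
    by (simp add: algebra_simps)
  then show "\<exists>a b. x - z = fps_const ((f$0)^k) * a + f * b" by blast
qed

lemma compat:
  fixes f :: "'a::comm_ring_1 fps"
  assumes "\<forall>n. fadic_cong f n (a (Suc n)) (a n)"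
  shows "\<exists>s. \<forall>n. fadic_cong f n s (a n)"
proof -
  from assms obtain d e where de: "\<And>n. a (Suc n) - a n = fps_const ((f$0)^n) * d n + f * e n"
    unfolding fadic_cong_def by metis
  define G where "G n = a n - f * (\<Sum>k<n. e k)" for n
  have "G (Suc n) - G n = fps_const ((f$0)^n) * d n" for n
  proof -
    have "G (Suc n) - G n = (a (Suc n) - a n) - f * e n" by (simp add: G_def algebra_simps)
    then show ?thesis by (simp add: de)
  qed
  from core[of G f d, OF this] obtain g H E where
    gHE: "\<And>n. G n - g = f * H n - fps_const ((f$0)^n) * E n" by blast
  have "fadic_cong f n g (a n)" for n
  proof -
    have "g - a n = fps_const ((f$0)^n) * E n + f * (- (H n + (\<Sum>k<n. e k)))"
      using gHE[of n] by (simp add: G_def algebra_simps)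
    then show ?thesis unfolding fadic_cong_def by blast
  qed
  then show ?thesis by blast
qed

lemma cauchy_conv:
  fixes f :: "'a::comm_ring_1 fps"
  assumes "fadic_Cauchy f s" shows "fadic_converges f s"
proof -
  from assms obtain N where N: "\<And>k m n. m \<ge> N k \<Longrightarrow> n \<ge> N k \<Longrightarrow> fadic_cong f k (s m) (s n)"
    unfolding fadic_Cauchy_def by metis
  define M where "M k = (\<Sum>j\<le>k. N j)" for k
  have MN: "N k \<le> M k" for k unfolding M_def by (rule member_le_sum) auto
  have Mmono: "M k \<le> M (Suc k)" for k unfolding M_def by (rule sum_mono2) auto
  have "\<forall>k. fadic_cong f k (s (M (Suc k))) (s (M k))"
    using N MN Mmono by (meson le_trans)
  from compat[OF this] obtain l where l: "\<And>k. fadic_cong f k l (s (M k))" by blast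
  have "\<forall>n\<ge>M k. fadic_cong f k (s n) l" for k
    using N[of k] MN[of k] l[of k] cong_sym cong_trans by (meson le_trans order_refl)
  then show ?thesis unfolding fadic_converges_def by blast
qed

lemma sum_fun_apply: "(\<Sum>x\<in>A. F x) n = (\<Sum>x\<in>A. F x n)"
  by (induction A rule: infinite_finite_induct) auto

lemma embed_mult_nth:
  "((compl_embed f * H) $ i) n = (f * Abs_fps (\<lambda>i. (H $ i) n)) $ i"
  by (simp add: fps_mult_nth compl_embed_def sum_fun_apply)

lemma canon_surj:
  fixes f :: "'a::comm_ring_1 fps"
  assumes G: "\<forall>i. G $ i \<in> compl_carrier (f$0)"
  shows "\<exists>g. G - compl_embed g \<in> compl_ps_ideal (f$0) f"
proof -
  define t where "t = f$0"
  define Gn where "Gn n = Abs_fps (\<lambda>i. (G$i) n)" for n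
  define D where "D n = Abs_fps (\<lambda>i. SOME r. (G$i) (Suc n) - (G$i) n = t^n * r)" for n
  have "Gn (Suc n) - Gn n = fps_const ((f$0)^n) * D n" for n
  proof (rule fps_ext)
    fix i
    have "t^n dvd (G$i) (Suc n) - (G$i) n" using G unfolding compl_carrier_def t_def by blast
    then have "\<exists>r. (G$i) (Suc n) - (G$i) n = t^n * r" by (auto simp: dvd_def)
    from someI_ex[OF this] show "(Gn (Suc n) - Gn n) $ i = (fps_const ((f$0)^n) * D n) $ i"
      by (simp add: Gn_def D_def t_def)
  qed
  from core[of Gn f D, OF this] obtain g H E where
    gHE: "\<And>n. Gn n - g = f * H n - fps_const ((f$0)^n) * E n"
      and HS: "\<And>n. H (Suc n) - H n = fps_const ((f$0)^n) * E (Suc n)" by blast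
  define HH where "HH = Abs_fps (\<lambda>i n. H n $ i)"
  define NN where "NN = Abs_fps (\<lambda>i n. - (t^n * E n $ i))"
  have "G - compl_embed g = NN + compl_embed f * HH"
  proof (rule fps_ext, rule ext)
    fix i n
    have "(Gn n - g) $ i = (f * H n - fps_const ((f$0)^n) * E n) $ i" using gHE by simp
    moreover have "Abs_fps (\<lambda>i. (HH $ i) n) = H n" by (simp add: HH_def fps_nth_inverse)
    ultimately show "((G - compl_embed g) $ i) n = ((NN + compl_embed f * HH) $ i) n"
      unfolding fps_add_nth plus_fun_apply embed_mult_nth by (simp add: embed_mult_nth Gn_def NN_def compl_embed_def t_def)
  qed
  moreover have "\<forall>i. HH $ i \<in> compl_carrier t"
  proof (intro allI)
    fix i
    have "H (Suc n) $ i - H n $ i = t^n * E (Suc n) $ i" for n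
      using arg_cong[OF HS[of n], of "\<lambda>x. x $ i"] by (simp add: t_def)
    then show "HH $ i \<in> compl_carrier t" unfolding compl_carrier_def HH_def
      by (simp add: dvd_def) metis
  qed
  moreover have "\<forall>i. NN $ i \<in> compl_null t" unfolding compl_null_def NN_def by simp
  ultimately show ?thesis unfolding compl_ps_ideal_def t_def by blast
qed

lemma canon_inj_aux:
  fixes f :: "'a::comm_ring_1 fps"
  assumes "compl_embed g \<in> compl_ps_ideal (f$0) f"
  shows "fadic_cong f n g 0"
proof -
  define t where "t = f$0"
  from assms obtain HH NN where HH: "\<forall>i. HH $ i \<in> compl_carrier t" and NN: "\<forall>i. NN $ i \<in> compl_null t"
    and eq: "compl_embed g = NN + compl_embed f * HH"
    unfolding compl_ps_ideal_def t_def by blast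
  define A where "A = Abs_fps (\<lambda>i. SOME r. (NN $ i) n = t^n * r)"
  define B where "B = Abs_fps (\<lambda>i. (HH $ i) n)"
  have "g = fps_const ((f$0)^n) * A + f * B"
  proof (rule fps_ext)
    fix i
    have "t^n dvd (NN $ i) n" using NN unfolding compl_null_def by blast
    then have "\<exists>r. (NN $ i) n = t^n * r" by (auto simp: dvd_def)
    note s = someI_ex[OF this]
    have "(compl_embed g $ i) n = ((NN + compl_embed f * HH) $ i) n" using eq by simp
    then have "g $ i = (NN $ i) n + (f * B) $ i"
      by (simp only: fps_add_nth plus_fun_apply embed_mult_nth B_def) (simp add: compl_embed_def)
    then show "g $ i = (fps_const ((f$0)^n) * A + f * B) $ i"
      using s by (simp add: embed_mult_nth compl_embed_def A_def B_def t_def)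
  qed
  then show ?thesis unfolding fadic_cong_def by (metis diff_zero)
qed

lemma X_factor:
  fixes b :: "'a::comm_ring_1 fps"
  assumes "b$0 = 0" shows "b = fps_X * fps_shift 1 b"
  by (rule fps_ext) (use assms in \<open>auto simp: fps_X_mult_nth\<close>)

lemma cong_Xform:
  fixes f :: "'a::comm_ring_1 fps"
  assumes "fadic_cong f n g 0" shows "\<exists>a B. g = fps_X^n * a + f * B"
proof -
  define T where "T = fps_const (f$0)"
  define b where "b = T - f"
  have b0: "b$0 = 0" by (simp add: b_def T_def)
  from assms obtain a \<beta> where g: "g = T^n * a + f * \<beta>"
    unfolding fadic_cong_def T_def by (auto simp: fps_const_power)
  have fT: "f = T - b" by (simp add: b_def)
  have cc: "f * ccf T b n = T^n - b^n" using ccf_prop[of T b n] fT by simp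
  have "b^n = fps_X^n * (fps_shift 1 b)^n"
    by (subst X_factor[OF b0]) (simp add: power_mult_distrib)
  have Tn: "T^n = b^n + f * ccf T b n" using cc by (simp add: algebra_simps)
  have "g = (b^n + f * ccf T b n) * a + f * \<beta>" using g Tn by simp
  also have "\<dots> = fps_X^n * ((fps_shift 1 b)^n * a) + f * (ccf T b n * a + \<beta>)"
    unfolding \<open>b^n = _\<close> by (simp add: algebra_simps)
  finally have "g = fps_X^n * ((fps_shift 1 b)^n * a) + f * (ccf T b n * a + \<beta>)" .
  then show ?thesis by blast
qed

lemma nzd_low:
  fixes f h :: "'a::comm_ring_1 fps"
  assumes nz: "nonzerodivisor (f$0)" and z: "\<And>j. j < m \<Longrightarrow> (f*h)$j = 0"
  shows "j < m \<Longrightarrow> h$j = 0"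
proof (induction j rule: less_induct)
  case (less j)
  have "(f*h)$j = f$0 * h$j + (\<Sum>i=Suc 0..j. f$i * h$(j-i))"
    unfolding fps_mult_nth by (subst sum.atLeast_Suc_atMost) auto
  also have "(\<Sum>i=Suc 0..j. f$i * h$(j-i)) = 0"
    using less by (intro sum.neutral) auto
  finally have "f$0 * h$j = 0" using z[OF less.prems] by simp
  then show ?case using nz unfolding nonzerodivisor_def by blast
qed

lemma nzd_closed:
  fixes f g :: "'a::comm_ring_1 fps"
  assumes nz: "nonzerodivisor (f$0)" and h: "\<And>n. \<exists>a B. g = fps_X^n * a + f * B"
  shows "f dvd g"
proof -
  from h obtain A B where AB: "\<And>n. g = fps_X^n * A n + f * B n" by metis
  have stab: "B n $ j = B m $ j" if "j < m" "m \<le> n" for j m n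
  proof -
    have 1: "f * B n = g - fps_X^n * A n" for n by (subst AB[of n]) simp
    have "f * (B n - B m) = fps_X^m * A m - fps_X^n * A n"
      by (simp add: right_diff_distrib 1)
    then have "(f * (B n - B m))$j' = 0" if "j' < m" for j'
      using that \<open>m \<le> n\<close> by (simp add: fps_X_power_mult_nth)
    from nzd_low[OF nz this] that show ?thesis by simp
  qed
  define B' where "B' = Abs_fps (\<lambda>i. B (Suc i) $ i)"
  have "g = f * B'"
  proof (rule fps_ext)
    fix i
    have "(f * B')$i = (\<Sum>j=0..i. f$j * B (Suc i) $ (i-j))"
      unfolding fps_mult_nth B'_def
      apply (intro sum.cong refl)
      subgoal for j using stab[of "i - j" "Suc (i - j)" "Suc i"] by simp
      done
    also have "\<dots> = (f * B (Suc i))$i" by (simp add: fps_mult_nth)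
    also have "\<dots> = g $ i"
    proof -
      have "(fps_X^(Suc i) * A (Suc i))$i = 0" by (simp only: fps_X_power_mult_nth) simp
      then show ?thesis using arg_cong[OF AB[of "Suc i"], of "\<lambda>x. x $ i"] by (simp only: fps_add_nth) simp
    qed
    finally show "g $ i = (f * B') $ i" by simp
  qed
  then show ?thesis by simp
qed



lemma ideal_zero: "is_ideal I \<Longrightarrow> 0 \<in> I" by (simp add: is_ideal_def)
lemma ideal_add: "is_ideal I \<Longrightarrow> x \<in> I \<Longrightarrow> y \<in> I \<Longrightarrow> x + y \<in> I" by (simp add: is_ideal_def)
lemma ideal_mult: "is_ideal I \<Longrightarrow> x \<in> I \<Longrightarrow> r * x \<in> I" by (simp add: is_ideal_def)
lemma ideal_diff: "is_ideal I \<Longrightarrow> x \<in> I \<Longrightarrow> y \<in> I \<Longrightarrow> x - y \<in> I"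
  using ideal_add[of I x "(-1) * y"] ideal_mult[of I y "-1"] by simp
lemma ideal_sum:
  assumes "is_ideal I" "finite F" "\<And>x. x\<in>F \<Longrightarrow> P x \<in> I" shows "(\<Sum>x\<in>F. P x) \<in> I"
  using assms(2,3) by (induction F rule: finite_induct) (auto simp: ideal_zero[OF assms(1)] ideal_add[OF assms(1)])

lemma acc:
  fixes L :: "nat \<Rightarrow> 'b::comm_ring_1 set"
  assumes noeth: "noetherian TYPE('b)" and id: "\<And>k. is_ideal (L k)" and mono: "\<And>k. L k \<subseteq> L (Suc k)"
  shows "\<exists>d. \<forall>k. L k \<subseteq> L d"
proof -
  have mono': "i \<le> j \<Longrightarrow> L i \<subseteq> L j" for i j using lift_Suc_mono_le[of L] mono by blast
  define U where "U = (\<Union>k. L k)"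
  have "is_ideal U" unfolding is_ideal_def
  proof (intro conjI ballI allI)
    show "0 \<in> U" using ideal_zero[OF id] U_def by blast
  next
    fix x y assume "x \<in> U" "y \<in> U"
    then obtain i j where "x \<in> L i" "y \<in> L j" unfolding U_def by blast
    then have "x \<in> L (max i j)" "y \<in> L (max i j)" using mono'[of i "max i j"] mono'[of j "max i j"] by auto
    then show "x + y \<in> U" unfolding U_def using ideal_add[OF id] by blast
  next
    fix r x assume "x \<in> U"
    then show "r * x \<in> U" unfolding U_def using ideal_mult[OF id] by blast
  qed
  then obtain F where F: "finite F" "F \<subseteq> U" "\<forall>x\<in>U. \<exists>c. x = (\<Sum>a\<in>F. c a * a)"
    using noeth[unfolded noetherian_def, rule_format, of U] by blast
  have "\<forall>a\<in>F. \<exists>k. a \<in> L k" using F(2) unfolding U_def by blast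
  then obtain kf where kf: "\<And>a. a\<in>F \<Longrightarrow> a \<in> L (kf a)" by metis
  define d where "d = (\<Sum>a\<in>F. kf a)"
  have Fd: "a \<in> L d" if "a \<in> F" for a
    using kf[OF that] mono'[of "kf a" d] member_le_sum[of a F kf] that F(1) unfolding d_def by auto
  have "L k \<subseteq> L d" for k
  proof
    fix x assume "x \<in> L k"
    then obtain c where "x = (\<Sum>a\<in>F. c a * a)" using F(3) U_def by blast
    then show "x \<in> L d" using ideal_sum[OF id F(1)] ideal_mult[OF id Fd] by simp
  qed
  then show ?thesis by blast
qed

lemma term_nth: "(fps_const c * fps_X^e * g)$j = c * (if j < e then 0 else g$(j-e))"
  by (simp add: mult.assoc fps_X_power_mult_nth del: fps_X_power_nth)

lemma approx:
  fixes I :: "'a::comm_ring_1 fps set" and gen :: "'i \<Rightarrow> 'a fps" and lv :: "'i \<Rightarrow> nat"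
  assumes idI: "is_ideal I" and fin: "finite Ix"
    and genI: "\<And>i. i \<in> Ix \<Longrightarrow> gen i \<in> I"
    and genz: "\<And>i j. i \<in> Ix \<Longrightarrow> j < lv i \<Longrightarrow> gen i $ j = 0"
    and P: "\<And>k h. h \<in> I \<Longrightarrow> (\<forall>j<k. h$j = 0) \<Longrightarrow>
              \<exists>c. (\<forall>i\<in>Ix. k < lv i \<longrightarrow> c i = 0) \<and> h$k = (\<Sum>i\<in>Ix. c i * gen i $ lv i)"
    and hI: "h \<in> I"
  shows "\<exists>C. h = (\<Sum>i\<in>Ix. C i * gen i)"
proof -
  define cf where "cf k x = (SOME c. (\<forall>i\<in>Ix. k < lv i \<longrightarrow> c i = 0) \<and> x$k = (\<Sum>i\<in>Ix. c i * gen i $ lv i))" for k x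
  define corr where "corr k x = (\<Sum>i\<in>Ix. fps_const (cf k x i) * fps_X^(k - lv i) * gen i)" for k x
  define hs where "hs = rec_nat h (\<lambda>k x. x - corr k x)"
  have hs0: "hs 0 = h" and hsS: "hs (Suc k) = hs k - corr k (hs k)" for k by (simp_all add: hs_def)
  have corrI: "corr k x \<in> I" for k x
    unfolding corr_def by (rule ideal_sum[OF idI fin]) (rule ideal_mult[OF idI genI])
  have cfp: "(\<forall>i\<in>Ix. k < lv i \<longrightarrow> cf k x i = 0) \<and> x$k = (\<Sum>i\<in>Ix. cf k x i * gen i $ lv i)"
    if "x \<in> I" "\<forall>j<k. x$j = 0" for k x
    unfolding cf_def by (rule someI_ex[OF P[OF that]])
  have corr_low: "corr k x $ j = 0" if "x \<in> I" "\<forall>j<k. x$j = 0" "j < k" for k x j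
  proof -
    have "corr k x $ j = (\<Sum>i\<in>Ix. cf k x i * (if j < k - lv i then 0 else gen i $ (j - (k - lv i))))"
      unfolding corr_def fps_sum_nth term_nth ..
    also have "\<dots> = 0"
    proof (rule sum.neutral, rule ballI)
      fix i assume i: "i \<in> Ix"
      show "cf k x i * (if j < k - lv i then 0 else gen i $ (j - (k - lv i))) = 0"
      proof (cases "k < lv i")
        case True then show ?thesis using cfp[OF that(1,2)] i by simp
      next
        case False then show ?thesis using genz[OF i, of "j - (k - lv i)"] \<open>j < k\<close> by auto
      qed
    qed
    finally show ?thesis .
  qed
  have corr_top: "corr k x $ k = x $ k" if "x \<in> I" "\<forall>j<k. x$j = 0" for k x
  proof -
    have "corr k x $ k = (\<Sum>i\<in>Ix. cf k x i * (if k < k - lv i then 0 else gen i $ (k - (k - lv i))))"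
      unfolding corr_def fps_sum_nth term_nth ..
    also have "\<dots> = (\<Sum>i\<in>Ix. cf k x i * gen i $ lv i)"
    proof (rule sum.cong[OF refl])
      fix i assume i: "i \<in> Ix"
      show "cf k x i * (if k < k - lv i then 0 else gen i $ (k - (k - lv i))) = cf k x i * gen i $ lv i"
      proof (cases "k < lv i")
        case True then show ?thesis using cfp[OF that(1,2)] i by simp
      next
        case False then show ?thesis by auto
      qed
    qed
    also have "\<dots> = x $ k" using cfp[OF that] by simp
    finally show ?thesis .
  qed
  have inv: "hs k \<in> I \<and> (\<forall>j<k. hs k $ j = 0)" for k
  proof (induction k)
    case 0 then show ?case using hI hs0 by simp
  next
    case (Suc k)
    then have 1: "hs k \<in> I" "\<forall>j<k. hs k $ j = 0" by auto
    have "hs (Suc k) \<in> I" unfolding hsS by (rule ideal_diff[OF idI 1(1) corrI])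
    moreover have "\<forall>j<Suc k. hs (Suc k) $ j = 0"
    proof (intro allI impI)
      fix j assume "j < Suc k"
      then consider "j < k" | "j = k" by linarith
      then show "hs (Suc k) $ j = 0"
      proof cases
        case 1 then show ?thesis using corr_low[OF \<open>hs k \<in> I\<close> \<open>\<forall>j<k. hs k $ j = 0\<close>] \<open>\<forall>j<k. hs k $ j = 0\<close>
          by (simp add: hsS)
      next
        case 2 then show ?thesis using corr_top[OF \<open>hs k \<in> I\<close> \<open>\<forall>j<k. hs k $ j = 0\<close>] by (simp add: hsS)
      qed
    qed
    ultimately show ?case by blast
  qed
  define c where "c k i = cf k (hs k) i" for k i
  have c0: "c k i = 0" if "i \<in> Ix" "k < lv i" for k i
    using cfp[of "hs k" k] inv[of k] that unfolding c_def by blast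
  define C where "C i = Abs_fps (\<lambda>j. c (lv i + j) i)" for i
  define PP where "PP m i = (\<Sum>k\<le>m. fps_const (c k i) * fps_X^(k - lv i))" for m i
  have tele: "h = hs (Suc m) + (\<Sum>k\<le>m. corr k (hs k))" for m
    by (induction m) (simp_all add: hs0 hsS)
  have swap: "(\<Sum>k\<le>m. corr k (hs k)) = (\<Sum>i\<in>Ix. PP m i * gen i)" for m
    unfolding corr_def PP_def c_def sum_distrib_right by (rule sum.swap)
  have PPnth: "PP m i $ j = C i $ j" if "i \<in> Ix" "j + lv i \<le> m" for m i j
  proof -
    have "PP m i $ j = (\<Sum>k\<le>m. if k = j + lv i then c k i else 0)"
      unfolding PP_def fps_sum_nth
    proof (rule sum.cong[OF refl])
      fix k assume "k \<in> {..m}"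
      show "(fps_const (c k i) * fps_X ^ (k - lv i)) $ j = (if k = j + lv i then c k i else 0)"
        using c0[OF that(1), of k] by (cases "k < lv i") auto
    qed
    also have "\<dots> = c (j + lv i) i" using that(2) by (simp add: sum.delta')
    finally show ?thesis by (simp add: C_def add.commute)
  qed
  have coef: "(PP m i * gen i) $ m = (C i * gen i) $ m" if i: "i \<in> Ix" for m i
  proof -
    have "((PP m i - C i) * gen i) $ m = 0"
      unfolding fps_mult_nth
    proof (rule sum.neutral, rule ballI)
      fix j assume "j \<in> {0..m}"
      show "(PP m i - C i) $ j * gen i $ (m - j) = 0"
      proof (cases "j + lv i \<le> m")
        case True then show ?thesis using PPnth[OF i] by simp
      next
        case False then show ?thesis using genz[OF i, of "m - j"] \<open>j \<in> {0..m}\<close> by auto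
      qed
    qed
    then show ?thesis by (simp add: algebra_simps)
  qed
  have "h = (\<Sum>i\<in>Ix. C i * gen i)"
  proof (rule fps_ext)
    fix m
    have "h $ m = hs (Suc m) $ m + (\<Sum>i\<in>Ix. (PP m i * gen i) $ m)"
      using arg_cong[OF tele[of m], of "\<lambda>x. x $ m"] by (simp add: swap fps_sum_nth)
    also have "\<dots> = (\<Sum>i\<in>Ix. (C i * gen i) $ m)" using inv[of "Suc m"] coef by simp
    finally show "h $ m = (\<Sum>i\<in>Ix. C i * gen i) $ m" by (simp add: fps_sum_nth)
  qed
  then show ?thesis by blast
qed

lemma hilbert:
  assumes noeth: "noetherian TYPE('a::comm_ring_1)"
  shows "noetherian TYPE('a fps)"
  unfolding noetherian_def
proof (intro allI impI)
  fix I :: "'a fps set" assume idI: "is_ideal I"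
  define Lk where "Lk k = {a. \<exists>h\<in>I. (\<forall>j<k. h$j = 0) \<and> h$k = a}" for k
  have Lid: "is_ideal (Lk k)" for k unfolding is_ideal_def
  proof (intro conjI ballI allI)
    show "0 \<in> Lk k" unfolding Lk_def using ideal_zero[OF idI] by force
  next
    fix x y assume "x \<in> Lk k" "y \<in> Lk k"
    then obtain h h' where "h \<in> I" "\<forall>j<k. h$j = 0" "h$k = x" "h' \<in> I" "\<forall>j<k. h'$j = 0" "h'$k = y"
      unfolding Lk_def by blast
    then show "x + y \<in> Lk k" unfolding Lk_def using ideal_add[OF idI, of h h']
      by (intro CollectI bexI[of _ "h + h'"]) auto
  next
    fix r x assume "x \<in> Lk k"
    then obtain h where "h \<in> I" "\<forall>j<k. h$j = 0" "h$k = x" unfolding Lk_def by blast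
    then show "r * x \<in> Lk k" unfolding Lk_def using ideal_mult[OF idI, of h "fps_const r"]
      by (intro CollectI bexI[of _ "fps_const r * h"]) auto
  qed
  have Lmono: "Lk k \<subseteq> Lk (Suc k)" for k
  proof
    fix x assume "x \<in> Lk k"
    then obtain h where h: "h \<in> I" "\<forall>j<k. h$j = 0" "h$k = x" unfolding Lk_def by blast
    have "\<forall>j<Suc k. (fps_X * h) $ j = 0" using h(2) by (auto simp: fps_X_mult_nth)
    then show "x \<in> Lk (Suc k)" unfolding Lk_def using ideal_mult[OF idI h(1), of fps_X] h(3)
      by (intro CollectI bexI[of _ "fps_X * h"]) (auto simp: fps_X_mult_nth)
  qed
  obtain d where d: "\<And>k. Lk k \<subseteq> Lk d" using acc[of Lk, OF noeth Lid Lmono] by blast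
  have "\<forall>k. \<exists>F. finite F \<and> F \<subseteq> Lk k \<and> (\<forall>x\<in>Lk k. \<exists>c. x = (\<Sum>a\<in>F. c a * a))"
    using noeth[unfolded noetherian_def, rule_format, OF Lid] by blast
  then obtain FF where FF: "\<And>k. finite (FF k)" "\<And>k. FF k \<subseteq> Lk k"
      "\<And>k x. x \<in> Lk k \<Longrightarrow> \<exists>c. x = (\<Sum>a\<in>FF k. c a * a)" by metis
  define hh where "hh k a = (SOME h. h \<in> I \<and> (\<forall>j<k. h$j = 0) \<and> h$k = a)" for k a
  have hhp: "hh k a \<in> I \<and> (\<forall>j<k. hh k a $ j = 0) \<and> hh k a $ k = a" if "a \<in> Lk k" for k a
    unfolding hh_def by (rule someI_ex) (use that in \<open>auto simp: Lk_def\<close>)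
  define Ix where "Ix = Sigma {..d} FF"
  have fin: "finite Ix" unfolding Ix_def using FF(1) by auto
  have ixL: "snd i \<in> Lk (fst i)" if "i \<in> Ix" for i using that FF(2) unfolding Ix_def by (cases i) auto
  have genI: "hh (fst i) (snd i) \<in> I" if "i \<in> Ix" for i using hhp[OF ixL[OF that]] by blast
  have genz: "hh (fst i) (snd i) $ j = 0" if "i \<in> Ix" "j < fst i" for i j
    using hhp[OF ixL[OF that(1)]] that(2) by blast
  have P: "\<exists>c. (\<forall>i\<in>Ix. k < fst i \<longrightarrow> c i = 0) \<and>
              h$k = (\<Sum>i\<in>Ix. c i * hh (fst i) (snd i) $ fst i)"
    if hI: "h \<in> I" and hz: "\<forall>j<k. h$j = 0" for k h
  proof -
    define k' where "k' = min k d"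
    have "h$k \<in> Lk k" unfolding Lk_def using hI hz by blast
    then have hk: "h$k \<in> Lk k'"
    proof (cases "k \<le> d")
      case True then show ?thesis using \<open>h$k \<in> Lk k\<close> by (simp add: k'_def)
    next
      case False then have "k' = d" by (simp add: k'_def)
      then show ?thesis using \<open>h$k \<in> Lk k\<close> d[of k] by blast
    qed
    obtain coef where coef: "h$k = (\<Sum>a\<in>FF k'. coef a * a)" using FF(3)[OF hk] by blast
    define c where "c i = (if fst i = k' then coef (snd i) else 0)" for i :: "nat \<times> 'a"
    have "(\<Sum>i\<in>Ix. c i * hh (fst i) (snd i) $ fst i)
        = (\<Sum>k''\<in>{..d}. \<Sum>a\<in>FF k''. c (k'', a) * hh k'' a $ k'')"
      unfolding Ix_def using FF(1) by (subst sum.Sigma) (auto simp: split_beta)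
    also have "\<dots> = (\<Sum>k''\<in>{..d}. if k'' = k' then (\<Sum>a\<in>FF k'. coef a * hh k' a $ k') else 0)"
    proof (rule sum.cong[OF refl])
      fix k'' show "(\<Sum>a\<in>FF k''. c (k'', a) * hh k'' a $ k'') =
          (if k'' = k' then (\<Sum>a\<in>FF k'. coef a * hh k' a $ k') else 0)"
        by (cases "k'' = k'") (simp_all add: c_def)
    qed
    also have "\<dots> = (\<Sum>a\<in>FF k'. coef a * hh k' a $ k')" by (simp add: k'_def)
    also have "\<dots> = (\<Sum>a\<in>FF k'. coef a * a)"
    proof (rule sum.cong[OF refl])
      fix a assume "a \<in> FF k'"
      then have "a \<in> Lk k'" using FF(2) by blast
      then show "coef a * hh k' a $ k' = coef a * a" using hhp[of a k'] by simp
    qed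
    finally have "h$k = (\<Sum>i\<in>Ix. c i * hh (fst i) (snd i) $ fst i)" using coef by simp
    moreover have "\<forall>i\<in>Ix. k < fst i \<longrightarrow> c i = 0" unfolding c_def k'_def by auto
    ultimately show ?thesis by blast
  qed
  define F where "F = (\<lambda>i. hh (fst i) (snd i)) ` Ix"
  have "\<exists>c. x = (\<Sum>a\<in>F. c a * a)" if xI: "x \<in> I" for x
  proof -
    obtain C where C: "x = (\<Sum>i\<in>Ix. C i * hh (fst i) (snd i))"
      using approx[OF idI fin genI genz P xI] by blast
    also have "\<dots> = (\<Sum>y\<in>F. \<Sum>i\<in>{i\<in>Ix. hh (fst i) (snd i) = y}. C i * hh (fst i) (snd i))"
      unfolding F_def by (rule sum.image_gen[OF fin])
    also have "\<dots> = (\<Sum>y\<in>F. (\<Sum>i\<in>{i\<in>Ix. hh (fst i) (snd i) = y}. C i) * y)"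
      by (intro sum.cong refl) (simp add: sum_distrib_right)
    finally show ?thesis by (rule exI[of _ "\<lambda>y. \<Sum>i\<in>{i\<in>Ix. hh (fst i) (snd i) = y}. C i"])
  qed
  moreover have "finite F" "F \<subseteq> I" unfolding F_def using fin genI by auto
  ultimately show "\<exists>F. finite F \<and> F \<subseteq> I \<and> (\<forall>x\<in>I. \<exists>c. x = (\<Sum>a\<in>F. c a * a))" by blast
qed



lemma unit_one_minus:
  fixes b :: "'a::comm_ring_1 fps"
  assumes b0: "b$0 = 0" shows "\<exists>v. v * (1 - b) = 1"
proof -
  define v where "v = Sb b (\<lambda>_. 1)"
  have "v = 1 + b * v" unfolding v_def by (subst Sb_step[OF b0]) simp
  then have "v * (1 - b) = 1" by (simp add: algebra_simps)
  then show ?thesis by blast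
qed

lemma krull:
  fixes f g :: "'a::comm_ring_1 fps"
  assumes noeth: "noetherian TYPE('a fps)" and hg: "\<And>n. \<exists>a B. g = fps_X^n * a + f * B"
  shows "f dvd g"
proof -
  define N where "N = {y::'a fps. \<forall>n. \<exists>a B. y = fps_X^n * a + f * B}"
  have Nid: "is_ideal N" unfolding is_ideal_def
  proof (intro conjI ballI allI)
    show "0 \<in> N" unfolding N_def by (auto intro!: exI[of _ 0])
  next
    fix x y assume "x \<in> N" "y \<in> N"
    show "x + y \<in> N" unfolding N_def
    proof (intro CollectI allI)
      fix n
      obtain a B a' B' where "x = fps_X^n * a + f * B" "y = fps_X^n * a' + f * B'"
        using \<open>x \<in> N\<close> \<open>y \<in> N\<close> unfolding N_def by blast
      then have "x + y = fps_X^n * (a + a') + f * (B + B')" by (simp add: algebra_simps)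
      then show "\<exists>a B. x + y = fps_X^n * a + f * B" by blast
    qed
  next
    fix r x assume "x \<in> N"
    show "r * x \<in> N" unfolding N_def
    proof (intro CollectI allI)
      fix n
      obtain a B where "x = fps_X^n * a + f * B" using \<open>x \<in> N\<close> unfolding N_def by blast
      then have "r * x = fps_X^n * (r * a) + f * (r * B)" by (simp add: algebra_simps)
      then show "\<exists>a B. r * x = fps_X^n * a + f * B" by blast
    qed
  qed
  define K where "K n = {h::'a fps. f dvd fps_X^n * h}" for n
  have Kid: "is_ideal (K n)" for n unfolding is_ideal_def K_def
    by (auto simp: distrib_left mult.left_commute[of _ r for r])
  have Kmono: "K n \<subseteq> K (Suc n)" for n unfolding K_def
    by (auto simp: mult.assoc intro: dvd_mult)
  obtain c where c: "\<And>n. K n \<subseteq> K c" using acc[of K, OF noeth Kid Kmono] by blast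
  have step1: "\<exists>w\<in>N. \<exists>\<beta>. y = fps_X * w + f * \<beta>" if yN: "y \<in> N" for y
  proof -
    obtain z \<beta> where yz: "y = fps_X^(Suc c) * z + f * \<beta>" using yN unfolding N_def by blast
    define w where "w = fps_X^c * z"
    have "w \<in> N" unfolding N_def
    proof (intro CollectI allI)
      fix n
      show "\<exists>a B. w = fps_X^n * a + f * B"
      proof (cases "n \<le> c")
        case True
        then have "w = fps_X^n * (fps_X^(c-n) * z) + f * 0"
          by (simp add: w_def mult.assoc[symmetric] power_add[symmetric])
        then show ?thesis by blast
      next
        case False
        obtain z' \<beta>' where yz': "y = fps_X^(Suc n) * z' + f * \<beta>'" using yN unfolding N_def by blast
        have XX: "fps_X^(Suc c) * fps_X^(n-c) = (fps_X^(Suc n) :: 'a fps)"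
        proof -
          have "Suc c + (n - c) = Suc n" using False by simp
          then show ?thesis by (metis power_add)
        qed
        have "fps_X^(Suc c) * (z - fps_X^(n-c) * z') = f * (\<beta>' - \<beta>)"
        proof -
          have "fps_X^(Suc c) * (z - fps_X^(n-c) * z') = fps_X^(Suc c) * z - fps_X^(Suc n) * z'"
            by (simp only: right_diff_distrib mult.assoc[symmetric] XX)
          also have "\<dots> = (y - f * \<beta>) - (y - f * \<beta>')" by (metis yz yz' add_diff_cancel_right')
          also have "\<dots> = f * (\<beta>' - \<beta>)" by (simp add: algebra_simps)
          finally show ?thesis .
        qed
        then have "z - fps_X^(n-c) * z' \<in> K (Suc c)" unfolding K_def by (metis dvd_triv_left mem_Collect_eq)
        then have "z - fps_X^(n-c) * z' \<in> K c" using c by blast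
        then obtain \<gamma> where "fps_X^c * (z - fps_X^(n-c) * z') = f * \<gamma>" unfolding K_def by (auto elim: dvdE)
        moreover have "fps_X^c * fps_X^(n-c) = (fps_X^n :: 'a fps)"
        proof -
          have "c + (n - c) = n" using False by simp
          then show ?thesis by (metis power_add)
        qed
        ultimately have "w - fps_X^n * z' = f * \<gamma>"
          by (simp add: w_def right_diff_distrib mult.assoc[symmetric])
        then have "w = fps_X^n * z' + f * \<gamma>" by (simp add: algebra_simps)
        then show ?thesis by blast
      qed
    qed
    moreover have "y = fps_X * w + f * \<beta>" using yz by (simp add: w_def mult.assoc)
    ultimately show ?thesis by blast
  qed
  have nak: "finite F \<Longrightarrow> F \<subseteq> N \<Longrightarrow> (\<forall>y\<in>N. \<exists>c \<beta>. y = (\<Sum>a\<in>F. c a * a) + f * \<beta>) \<Longrightarrow> (\<forall>y\<in>N. f dvd y)" for F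
  proof (induction F rule: finite_induct)
    case empty then show ?case by auto
  next
    case (insert u F)
    have uN: "u \<in> N" using insert.prems by blast
    obtain w \<beta> where wN: "w \<in> N" and uw: "u = fps_X * w + f * \<beta>" using step1[OF uN] by blast
    obtain cw \<gamma> where wc: "w = (\<Sum>a\<in>insert u F. cw a * a) + f * \<gamma>" using insert.prems(2) wN by blast
    then have wc': "w = cw u * u + (\<Sum>a\<in>F. cw a * a) + f * \<gamma>" using insert.hyps by simp
    obtain v where v: "v * (1 - fps_X * cw u) = 1" using unit_one_minus[of "fps_X * cw u"] by auto
    have e1: "(1 - fps_X * cw u) * u = fps_X * (\<Sum>a\<in>F. cw a * a) + f * (fps_X * \<gamma> + \<beta>)"
    proof -
      have "(1 - fps_X * cw u) * u = u - fps_X * (cw u * u)" by (simp add: algebra_simps)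
      also have "\<dots> = fps_X * (\<Sum>a\<in>F. cw a * a) + f * (fps_X * \<gamma> + \<beta>)"
        by (subst (1) uw, subst wc') (simp add: algebra_simps)
      finally show ?thesis .
    qed
    have ukey: "u = (\<Sum>a\<in>F. (v * fps_X * cw a) * a) + f * (v * (fps_X * \<gamma> + \<beta>))"
    proof -
      have "u = v * ((1 - fps_X * cw u) * u)" using v by (simp add: mult.assoc[symmetric])
      also have "\<dots> = v * fps_X * (\<Sum>a\<in>F. cw a * a) + f * (v * (fps_X * \<gamma> + \<beta>))"
        by (subst e1) (simp add: algebra_simps)
      also have "v * fps_X * (\<Sum>a\<in>F. cw a * a) = (\<Sum>a\<in>F. (v * fps_X * cw a) * a)"
        by (simp add: sum_distrib_left mult.assoc)
      finally show ?thesis .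
    qed
    have "\<forall>y\<in>N. \<exists>c \<beta>. y = (\<Sum>a\<in>F. c a * a) + f * \<beta>"
    proof
      fix y assume "y \<in> N"
      then obtain d \<beta>' where "y = (\<Sum>a\<in>insert u F. d a * a) + f * \<beta>'" using insert.prems(2) by blast
      then have "y = d u * u + (\<Sum>a\<in>F. d a * a) + f * \<beta>'" using insert.hyps by simp
      also have "\<dots> = (\<Sum>a\<in>F. d u * (v * fps_X * cw a) * a) + (\<Sum>a\<in>F. d a * a)
                      + f * (\<beta>' + d u * (v * (fps_X * \<gamma> + \<beta>)))"
        by (subst (1) ukey) (simp add: algebra_simps sum_distrib_left)
      also have "\<dots> = (\<Sum>a\<in>F. (d u * (v * fps_X * cw a) + d a) * a) + f * (\<beta>' + d u * (v * (fps_X * \<gamma> + \<beta>)))"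
        by (simp add: sum.distrib distrib_right)
      finally show "\<exists>c \<beta>. y = (\<Sum>a\<in>F. c a * a) + f * \<beta>" by (intro exI)
    qed
    then show ?case using insert.IH insert.prems(1) by blast
  qed
  obtain F where F: "finite F" "F \<subseteq> N" "\<forall>x\<in>N. \<exists>c. x = (\<Sum>a\<in>F. c a * a)"
    using noeth[unfolded noetherian_def, rule_format, OF Nid] by blast
  have "\<forall>y\<in>N. \<exists>c \<beta>. y = (\<Sum>a\<in>F. c a * a) + f * \<beta>" using F(3) by (metis add.right_neutral mult_zero_right)
  then have "\<forall>y\<in>N. f dvd y" using nak F(1,2) by blast
  moreover have "g \<in> N" unfolding N_def using hg by blast
  ultimately show ?thesis by blast
qed


theorem lemma3p4:
  fixes f :: "'a::comm_ring_1 fps"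
  shows "(\<forall>s. fadic_Cauchy f s \<longrightarrow> fadic_converges f s) \<and>
         ((nonzerodivisor (fps_nth f 0) \<or> noetherian TYPE('a)) \<longrightarrow>
            fadic_complete f \<and> canon_map_iso f)"
proof (intro conjI allI impI)
  fix s assume "fadic_Cauchy f s" then show "fadic_converges f s" by (rule cauchy_conv)
next
  assume hyp: "nonzerodivisor (fps_nth f 0) \<or> noetherian TYPE('a)"
  have closed: "f dvd g" if "\<forall>n. fadic_cong f n g 0" for g
  proof -
    have X: "\<And>n. \<exists>a B. g = fps_X^n * a + f * B" using that cong_Xform by blast
    from hyp show ?thesis
    proof
      assume "nonzerodivisor (f $ 0)" then show ?thesis using nzd_closed X by blast
    next
      assume "noetherian TYPE('a)" then show ?thesis using krull[OF hilbert] X by blast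
    qed
  qed
  show "fadic_complete f" unfolding fadic_complete_def using closed compat by blast
  show "canon_map_iso f" unfolding canon_map_iso_def using closed canon_inj_aux canon_surj by blast
qed

end
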